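(* Let $k$ be an uncountable algebraically closed field and let $C_1,C_2$ be noncentral conjugacy classes of $G=SL_2(k)$. There exists $(x_1,x_2)\in C_1\times C_2$ such that $\langle x_1,x_2\rangle$ is Zariski dense in $G$ if and only if it is not the case that both $C_1$ and $C_2$ are classes of involutions modulo the center (i.e. classes whose images in $G/Z(G)$ consist of elements of order $2$). *)

theory Defs
  imports "HOL-Analysis.Analysis" "HOL-Computational_Algebra.Polynomial"
    "HOL-Algebra.Generated_Groups"
begin

definition SL2 :: "('k::field ^2^2) monoid" where
  "SL2 = \<lparr>carrier = {A. det A = 1}, mult = (\<lambda>A B. A ** B), one = mat 1\<rparr>"

definition grp_center :: "('a, 'b) monoid_scheme \<Rightarrow> 'a set" where
  "grp_center G = {z \<in> carrier G. \<forall>g \<in> carrier G. z \<otimes>\<^bsub>G\<^esub> g = g \<otimes>\<^bsub>G\<^esub> z}"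

definition conj_class :: "('a, 'b) monoid_scheme \<Rightarrow> 'a \<Rightarrow> 'a set" where
  "conj_class G x = {g \<otimes>\<^bsub>G\<^esub> x \<otimes>\<^bsub>G\<^esub> inv\<^bsub>G\<^esub> g | g. g \<in> carrier G}"

definition is_conj_class :: "('a, 'b) monoid_scheme \<Rightarrow> 'a set \<Rightarrow> bool" where
  "is_conj_class G C \<longleftrightarrow> (\<exists>x \<in> carrier G. C = conj_class G x)"

text \<open>A class of involutions modulo the center: every element has image of order 2
  in G/Z(G), i.e. it is not central but its square is central.\<close>
definition involution_mod_center_class :: "('a, 'b) monoid_scheme \<Rightarrow> 'a set \<Rightarrow> bool" where
  "involution_mod_center_class G C \<longleftrightarrow>
     (\<forall>x \<in> C. x \<notin> grp_center G \<and> x \<otimes>\<^bsub>G\<^esub> x \<in> grp_center G)"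

inductive_set matrix_poly_fun :: "('k::comm_ring_1 ^2^2 \<Rightarrow> 'k) set" where
  const: "(\<lambda>A. c) \<in> matrix_poly_fun"
| coord: "(\<lambda>A. A $ i $ j) \<in> matrix_poly_fun"
| add: "p \<in> matrix_poly_fun \<Longrightarrow> q \<in> matrix_poly_fun \<Longrightarrow> (\<lambda>A. p A + q A) \<in> matrix_poly_fun"
| mult: "p \<in> matrix_poly_fun \<Longrightarrow> q \<in> matrix_poly_fun \<Longrightarrow> (\<lambda>A. p A * q A) \<in> matrix_poly_fun"

definition zariski_dense_SL2 :: "('k::field ^2^2) set \<Rightarrow> bool" where
  "zariski_dense_SL2 S \<longleftrightarrow>
     (\<forall>p \<in> matrix_poly_fun. (\<forall>x \<in> S. p x = 0) \<longrightarrow> (\<forall>x \<in> carrier SL2. p x = 0))"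

end

theory Submission
  imports Defs "HOL-Computational_Algebra.Polynomial" "HOL-Library.Countable_Set"
begin


definition mk :: "'a::zero \<Rightarrow> 'a \<Rightarrow> 'a \<Rightarrow> 'a \<Rightarrow> 'a^2^2" where
  "mk a b c d = (\<chi> i j. if i = 1 then (if j = 1 then a else b) else (if j = 1 then c else d))"

lemma two_ne_one [simp]: "(2::2) \<noteq> 1" "(1::2) \<noteq> 2" by auto

lemma mk_nth [simp]: "mk a b c d $ 1 $ 1 = a" "mk a b c d $ 1 $ 2 = b"
  "mk a b c d $ 2 $ 1 = c" "mk a b c d $ 2 $ 2 = d"
  by (simp_all add: mk_def)

lemma mat_mk: "A = mk (A$1$1) (A$1$2) (A$2$1) (A$2$2)"
  unfolding mk_def vec_eq_iff by (simp add: forall_2)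

lemma mk_eq_iff: "mk a b c d = mk a' b' c' d' \<longleftrightarrow> a = a' \<and> b = b' \<and> c = c' \<and> d = d'"
  by (metis mk_nth)

lemma mk_mult [simp]: "mk a b c d ** mk e f g h = mk (a*e+b*g) (a*f+b*h) (c*e+d*g) (c*f+d*h)"
  by (subst mat_mk) (simp add: matrix_matrix_mult_def sum_2)

lemma det_mk [simp]: "det (mk a b c d) = a*d - b*(c::'a::comm_ring_1)"
  by (simp add: det_2)

lemma mat1_mk: "mat 1 = mk 1 0 0 (1::'a::{zero,one})"
  by (subst mat_mk) (simp add: mat_def)

definition adj2 :: "'a::comm_ring_1^2^2 \<Rightarrow> 'a^2^2" where
  "adj2 X = mk (X$2$2) (-X$1$2) (-X$2$1) (X$1$1)"

lemma carrier_SL2 [simp]: "carrier SL2 = {A. det A = 1}" and mult_SL2 [simp]: "mult SL2 = (**)"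
  and one_SL2 [simp]: "one SL2 = mat 1"
  by (simp_all add: SL2_def)

lemma mk_cases: obtains a b c d where "X = mk a b c d"
  using mat_mk by blast

lemma adj2_mk [simp]: "adj2 (mk a b c d) = mk d (-b) (-c) a"
  by (simp add: adj2_def)

lemma adj2_mult: "det X = 1 \<Longrightarrow> X ** adj2 X = mat 1" "det X = 1 \<Longrightarrow> adj2 X ** X = mat 1"
  by (cases X rule: mk_cases, simp add: mat1_mk mk_eq_iff algebra_simps)+

lemma det_adj2 [simp]: "det (adj2 X) = det X"
  by (cases X rule: mk_cases) (simp add: algebra_simps)

lemma group_SL2: "group (SL2 :: ('k::field^2^2) monoid)"
proof (rule groupI)
  show "\<And>x y. x \<in> carrier (SL2::('k^2^2) monoid) \<Longrightarrow> y \<in> carrier SL2 \<Longrightarrow> x \<otimes>\<^bsub>SL2\<^esub> y \<in> carrier SL2"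
    by (simp add: det_mul)
  show "\<one>\<^bsub>SL2\<^esub> \<in> carrier (SL2::('k^2^2) monoid)" by simp
  show "\<And>x y z. x \<in> carrier (SL2::('k^2^2) monoid) \<Longrightarrow> y \<in> carrier SL2 \<Longrightarrow> z \<in> carrier SL2 \<Longrightarrow>
    x \<otimes>\<^bsub>SL2\<^esub> y \<otimes>\<^bsub>SL2\<^esub> z = x \<otimes>\<^bsub>SL2\<^esub> (y \<otimes>\<^bsub>SL2\<^esub> z)"
    by (simp add: matrix_mul_assoc)
  show "\<And>x. x \<in> carrier (SL2::('k^2^2) monoid) \<Longrightarrow> \<one>\<^bsub>SL2\<^esub> \<otimes>\<^bsub>SL2\<^esub> x = x" by simp
  show "\<And>x. x \<in> carrier (SL2::('k^2^2) monoid) \<Longrightarrow> \<exists>y\<in>carrier SL2. y \<otimes>\<^bsub>SL2\<^esub> x = \<one>\<^bsub>SL2\<^esub>"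
    using adj2_mult det_adj2 by fastforce
qed

lemma inv_SL2: "(X::'k::field^2^2) \<in> carrier SL2 \<Longrightarrow> inv\<^bsub>SL2\<^esub> X = adj2 X"
  by (rule group.inv_equality[OF group_SL2]) (auto simp: adj2_mult)

lemma conj_class_iff: "(x::'k::field^2^2) \<in> carrier SL2 \<Longrightarrow>
   B \<in> conj_class SL2 x \<longleftrightarrow> (\<exists>g. det g = 1 \<and> B = g ** x ** adj2 g)"
  unfolding conj_class_def by (auto simp: inv_SL2) (metis inv_SL2 mem_Collect_eq carrier_SL2)

definition scal :: "'a::zero^2^2 \<Rightarrow> bool" where
  "scal X \<longleftrightarrow> X$1$2 = 0 \<and> X$2$1 = 0 \<and> X$1$1 = X$2$2"

lemma center_SL2: "(X::'k::field^2^2) \<in> grp_center SL2 \<longleftrightarrow> det X = 1 \<and> scal X"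
proof
  assume X: "X \<in> grp_center SL2"
  then have d: "det X = 1" by (simp add: grp_center_def)
  have "X ** mk 1 1 0 1 = mk 1 1 0 1 ** X" "X ** mk 1 0 1 1 = mk 1 0 1 1 ** X"
    using X by (auto simp: grp_center_def)
  then show "det X = 1 \<and> scal X" using d
    by (subst (asm) (1 2 3 4) mat_mk[of X]) (simp add: scal_def mk_eq_iff)
next
  assume "det X = 1 \<and> scal X"
  then show "X \<in> grp_center SL2"
  proof (cases X rule: mk_cases)
    case (1 a b c d)
    have "mk a b c d ** g = g ** mk a b c d" if "scal (mk a b c (d::'k))" for g
      using that by (cases g rule: mk_cases) (simp add: scal_def mk_eq_iff algebra_simps)
    then show ?thesis using 1 \<open>det X = 1 \<and> scal X\<close> by (auto simp: grp_center_def)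
  qed
qed

definition tr2 :: "'a::comm_ring_1^2^2 \<Rightarrow> 'a" where "tr2 X = X$1$1 + X$2$2"

definition sp :: "'a::comm_ring_1 \<Rightarrow> 'a \<Rightarrow> 'a^2^2 \<Rightarrow> 'a^2^2" where
  "sp \<alpha> \<beta> Y = mk (\<alpha> + \<beta>*Y$1$1) (\<beta>*Y$1$2) (\<beta>*Y$2$1) (\<alpha> + \<beta>*Y$2$2)"

lemma sq_central_trace0:
  fixes X :: "'k::field^2^2"
  assumes "det X = 1" "\<not> scal X" "scal (X ** X)" shows "tr2 X = 0"
proof (cases X rule: mk_cases)
  case (1 a b c d)
  show ?thesis
  proof (rule ccontr)
    assume t: "tr2 X \<noteq> 0"
    then have "a + d \<noteq> 0" using 1 by (simp add: tr2_def)
    moreover have "b * (a + d) = 0" "c * (a+d) = 0" "a*a = d*d"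
      using assms(3) 1 by (simp_all add: scal_def algebra_simps)
    moreover have "b * (a + d) = a * b + b * d" "c * (a+d) = a * c + c * d" "(a - d) * (a + d) = a*a - d*d"
      by (simp_all add: algebra_simps)
    ultimately have "b = 0" "c = 0" "(a - d) * (a + d) = 0"
      by auto
    then show False using assms(2) 1 \<open>a + d \<noteq> 0\<close> by (simp add: scal_def)
  qed
qed

lemma trace0_sq:
  fixes X :: "'k::field^2^2"
  assumes "det X = 1" "tr2 X = 0" shows "X ** X = mk (-1) 0 0 (-1)"
proof (cases X rule: mk_cases)
  case (1 a b c d)
  then have "d = -a" "a*d - b*c = 1" using assms by (simp_all add: tr2_def add_eq_0_iff)
  then have "a*a + b*c = -1" by algebra
  then show ?thesis using 1 \<open>d = -a\<close> by (simp add: mk_eq_iff algebra_simps)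
qed

lemma sp_mult:
  fixes y :: "'k::field^2^2"
  assumes "det y = 1"
  shows "sp \<alpha> \<beta> y ** sp \<gamma> \<delta> y = sp (\<alpha>*\<gamma> - \<beta>*\<delta>) (\<alpha>*\<delta>+\<beta>*\<gamma>+\<beta>*\<delta>*tr2 y) y"
proof (cases y rule: mk_cases)
  case (1 p q r w)
  have h: "p*w - q*r = 1" using assms 1 by simp
  show ?thesis unfolding 1 using h by (simp add: sp_def tr2_def mk_eq_iff) (intro conjI; ((simp add: algebra_simps; fail) | algebra))
qed

context
  fixes a b c e f g :: "'k::field"
  assumes h1: "-a*a - b*c = 1" and h2: "-e*e - f*g = 1"
begin

lemma if_b: "mk a b c (-a) ** sp \<gamma> \<delta> (mk a b c (-a) ** mk e f g (-e)) =
   sp (\<gamma> + \<delta>*tr2 (mk a b c (-a) ** mk e f g (-e))) (-\<delta>) (mk a b c (-a) ** mk e f g (-e)) ** mk a b c (-a)"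
  using h1 h2 by (simp add: sp_def tr2_def mk_eq_iff mat1_mk scal_def; (intro conjI; ((simp add: algebra_simps; fail) | algebra))?)

lemma if_c: "mk a b c (-a) ** mk a b c (-a) = sp (-1) 0 (mk a b c (-a) ** mk e f g (-e))"
  using h1 h2 by (simp add: sp_def tr2_def mk_eq_iff mat1_mk scal_def; (intro conjI; ((simp add: algebra_simps; fail) | algebra))?)

lemma if_d: "mk e f g (-e) = sp (-tr2 (mk a b c (-a) ** mk e f g (-e))) 1 (mk a b c (-a) ** mk e f g (-e)) ** mk a b c (-a)"
  using h1 h2 by (simp add: sp_def tr2_def mk_eq_iff mat1_mk scal_def; (intro conjI; ((simp add: algebra_simps; fail) | algebra))?)

lemma if_e: "mk a b c (-a) = sp 1 0 (mk a b c (-a) ** mk e f g (-e)) ** mk a b c (-a)"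
  using h1 h2 by (simp add: sp_def tr2_def mk_eq_iff mat1_mk scal_def; (intro conjI; ((simp add: algebra_simps; fail) | algebra))?)

lemma if_f1: "adj2 (mk a b c (-a)) = sp (-1) 0 (mk a b c (-a) ** mk e f g (-e)) ** mk a b c (-a)"
  using h1 h2 by (simp add: sp_def tr2_def mk_eq_iff mat1_mk scal_def; (intro conjI; ((simp add: algebra_simps; fail) | algebra))?)

lemma if_f2: "adj2 (mk e f g (-e)) = sp (tr2 (mk a b c (-a) ** mk e f g (-e))) (-1) (mk a b c (-a) ** mk e f g (-e)) ** mk a b c (-a)"
  using h1 h2 by (simp add: sp_def tr2_def mk_eq_iff mat1_mk scal_def; (intro conjI; ((simp add: algebra_simps; fail) | algebra))?)

lemma if_g: "mat 1 = sp 1 0 (mk a b c (-a) ** mk e f g (-e))"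
  using h1 h2 by (simp add: sp_def tr2_def mk_eq_iff mat1_mk scal_def; (intro conjI; ((simp add: algebra_simps; fail) | algebra))?)

lemma if_h: "sp \<alpha> \<beta> (mk a b c (-a) ** mk e f g (-e)) ** (mk a b c (-a) ** mk e f g (-e))
   = (mk a b c (-a) ** mk e f g (-e)) ** sp \<alpha> \<beta> (mk a b c (-a) ** mk e f g (-e))"
  using h1 h2 by (simp add: sp_def tr2_def mk_eq_iff mat1_mk scal_def; (intro conjI; ((simp add: algebra_simps; fail) | algebra))?)

lemma if_i: "tr2 (sp \<alpha> \<beta> (mk a b c (-a) ** mk e f g (-e)) ** mk a b c (-a)) = 0"
  using h1 h2 by (simp add: sp_def tr2_def) ((simp add: algebra_simps; fail) | algebra)

lemma if_j: "scal (mk a b c (-a) ** mk e f g (-e)) \<Longrightarrow>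
   sp \<alpha> \<beta> (mk a b c (-a) ** mk e f g (-e)) ** mk a b c (-a) = mk a b c (-a) ** sp \<alpha> \<beta> (mk a b c (-a) ** mk e f g (-e))"
  by (simp add: sp_def scal_def mk_eq_iff algebra_simps)

end


subsection \<open>Polynomial functions\<close>

lemma mpf_comp:
  assumes "p \<in> matrix_poly_fun" "\<And>i j. (\<lambda>X. F X $ i $ j) \<in> matrix_poly_fun"
  shows "(\<lambda>X. p (F X)) \<in> matrix_poly_fun"
  using assms(1)
proof induct
  case (const c) then show ?case by (rule matrix_poly_fun.const)
next
  case (coord i j) then show ?case by (rule assms(2))
next
  case (add p q) then show ?case using matrix_poly_fun.add[OF add(2) add(4)] by simp
next
  case (mult p q) then show ?case using matrix_poly_fun.mult[OF mult(2) mult(4)] by simp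
qed

lemma mpf_diff:
  assumes "p \<in> matrix_poly_fun" "q \<in> matrix_poly_fun"
  shows "(\<lambda>X. p X - q X :: 'k::comm_ring_1) \<in> matrix_poly_fun"
proof -
  have "(\<lambda>X. p X + (\<lambda>X. -1) X * q X) \<in> matrix_poly_fun"
    by (intro matrix_poly_fun.add matrix_poly_fun.mult matrix_poly_fun.const assms)
  then show ?thesis by simp
qed

lemma mpf_rmul: "(\<lambda>X. (X ** A) $ i $ j :: 'k::comm_ring_1) \<in> matrix_poly_fun"
proof -
  have "(\<lambda>X. (\<lambda>X. X $ i $ 1) X * (\<lambda>X. A $ 1 $ j) X + (\<lambda>X. X $ i $ 2) X * (\<lambda>X. A $ 2 $ j) X) \<in> matrix_poly_fun"
    by (intro matrix_poly_fun.add matrix_poly_fun.mult matrix_poly_fun.const matrix_poly_fun.coord)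
  then show ?thesis by (simp add: matrix_matrix_mult_def sum_2)
qed

lemma mpf_lmul: "(\<lambda>X. (A ** X) $ i $ j :: 'k::comm_ring_1) \<in> matrix_poly_fun"
proof -
  have "(\<lambda>X. (\<lambda>X. A $ i $ 1) X * (\<lambda>X. X $ 1 $ j) X + (\<lambda>X. A $ i $ 2) X * (\<lambda>X. X $ 2 $ j) X) \<in> matrix_poly_fun"
    by (intro matrix_poly_fun.add matrix_poly_fun.mult matrix_poly_fun.const matrix_poly_fun.coord)
  then show ?thesis by (simp add: matrix_matrix_mult_def sum_2)
qed

lemma mpf_witness_poly:
  "(\<lambda>X. tr2 X * ((X ** z) $ i $ j - (z ** X) $ i $ j) :: 'k::comm_ring_1) \<in> matrix_poly_fun"
  unfolding tr2_def
  by (intro matrix_poly_fun.add matrix_poly_fun.mult matrix_poly_fun.coord mpf_diff mpf_rmul mpf_lmul)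

lemma finite_sq: "finite {t::'k::field. t * t = c}"
proof -
  have "[:-c, 0, 1:] \<noteq> 0" by simp
  then have "finite {t. poly [:-c, 0, 1:] t = 0}" by (rule poly_roots_finite)
  moreover have "{t. poly [:-c, 0, 1:] t = 0} = {t. t * t = c}"
    by (rule Collect_cong) (simp add: algebra_simps)
  ultimately show ?thesis by (simp only:)
qed

lemma good_t: assumes "infinite (UNIV :: 'k::field set)"
  obtains t where "(t::'k)  \<noteq> 0" "t * t \<noteq> 1" "t * t \<noteq> -1"
proof -
  have fin: "finite ({0} \<union> {t::'k. t * t = 1} \<union> {t. t * t = -1})"
    using finite_sq[of 1] finite_sq[of "-1"] by simp
  obtain t where "t \<notin> {0} \<union> {t::'k. t * t = 1} \<union> {t. t * t = -1}"
    using ex_new_if_finite[OF assms fin] by blast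
  then show ?thesis by (intro that) auto
qed

lemma witness_exists:
  fixes z :: "'k::field^2^2"
  assumes "\<not> scal z" "infinite (UNIV :: 'k set)"
  shows "\<exists>X i j. det X = 1 \<and> tr2 X * ((X ** z) $ i $ j - (z ** X) $ i $ j) \<noteq> 0"
proof -
  obtain t :: 'k where t: "t \<noteq> 0" "t * t \<noteq> 1" "t * t \<noteq> -1" using good_t[OF assms(2)] by blast
  have A: "t + inverse t \<noteq> 0"
  proof
    assume "t + inverse t = 0"
    then have "t * (t + inverse t) = 0" by simp
    then have "t * t + 1 = 0" using t(1) by (simp add: algebra_simps)
    then show False using t(3) by (metis add_eq_0_iff minus_equation_iff)
  qed
  have B: "t - inverse t \<noteq> 0"
  proof
    assume "t - inverse t = 0"
    then have "t * (t - inverse t) = 0" by simp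
    then have "t * t - 1 = 0" using t(1) by (simp add: algebra_simps)
    then show False using t(2) by simp
  qed
  obtain p q r w where z: "z = mk p q r w" using mk_cases by blast
  have dX: "det (mk t 0 0 (inverse t)) = 1" "det (mk t 1 0 (inverse t)) = 1" using t(1) by simp_all
  consider "q \<noteq> 0" | "r \<noteq> 0" | "q = 0" "r = 0" "p \<noteq> w" using assms(1) z by (auto simp: scal_def)
  then show ?thesis
  proof cases
    case 1
    have "tr2 (mk t 0 0 (inverse t)) * ((mk t 0 0 (inverse t) ** z) $ 1 $ 2 - (z ** mk t 0 0 (inverse t)) $ 1 $ 2)
       = (t + inverse t) * (t - inverse t) * q" by (simp add: z tr2_def algebra_simps)
    also have "\<dots> \<noteq> 0" using A B 1 by simp
    finally show ?thesis using dX by blast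
  next
    case 2
    have "tr2 (mk t 0 0 (inverse t)) * ((mk t 0 0 (inverse t) ** z) $ 2 $ 1 - (z ** mk t 0 0 (inverse t)) $ 2 $ 1)
       = - ((t + inverse t) * (t - inverse t) * r)" by (simp add: z tr2_def algebra_simps)
    also have "\<dots> \<noteq> 0" using A B 2 by simp
    finally show ?thesis using dX by blast
  next
    case 3
    have "tr2 (mk t 1 0 (inverse t)) * ((mk t 1 0 (inverse t) ** z) $ 1 $ 2 - (z ** mk t 1 0 (inverse t)) $ 1 $ 2)
       = (t + inverse t) * (w - p)" by (simp add: z 3 tr2_def algebra_simps)
    also have "\<dots> \<noteq> 0" using A 3 by simp
    finally show ?thesis using dX by blast
  qed
qed


lemma not_dense:
  fixes x1 x2 :: "'k::field^2^2"
  assumes d1: "det x1 = 1" and d2: "det x2 = 1" and t1: "tr2 x1 = 0" and t2: "tr2 x2 = 0"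
    and ns: "\<not> scal x1" and inf: "infinite (UNIV :: 'k set)"
  shows "\<not> zariski_dense_SL2 (generate SL2 {x1, x2})"
proof -
  obtain a b c d where x1: "x1 = mk a b c d" using mk_cases by blast
  obtain e f g h where x2: "x2 = mk e f g h" using mk_cases by blast
  have dd: "d = -a" "h = -e" using t1 t2 x1 x2 by (simp_all add: tr2_def add_eq_0_iff)
  have ad: "a*d - b*c = 1" "e*h - f*g = 1" using d1 d2 x1 x2 by simp_all
  have h1: "-a*a - b*c = 1" using ad dd by simp
  have h2: "-e*e - f*g = 1" using ad dd by simp
  have x1': "x1 = mk a b c (-a)" and x2': "x2 = mk e f g (-e)" using x1 x2 dd by simp_all
  define y where "y = x1 ** x2"
  have dy: "det y = 1" unfolding y_def using d1 d2 by (simp add: det_mul)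
  define S where "S = {X. (\<exists>\<alpha> \<beta>. X = sp \<alpha> \<beta> y) \<or> (\<exists>\<alpha> \<beta>. X = sp \<alpha> \<beta> y ** x1)}"
  note facts = if_b[OF h1 h2, folded x1' x2', folded y_def]
    if_c[OF h1 h2, folded x1' x2', folded y_def]
    if_d[OF h1 h2, folded x1' x2', folded y_def]
    if_e[OF h1 h2, folded x1' x2', folded y_def]
    if_f1[OF h1 h2, folded x1' x2', folded y_def]
    if_f2[OF h1 h2, folded x1' x2', folded y_def]
    if_g[OF h1 h2, folded x1' x2', folded y_def]
    if_h[OF h1 h2, folded x1' x2', folded y_def]
    if_i[OF h1 h2, folded x1' x2', folded y_def]
    if_j[OF h1 h2, folded x1' x2', folded y_def]
  note spm = sp_mult[OF dy]
  have VV: "sp \<alpha> \<beta> y ** sp \<gamma> \<delta> y \<in> S" for \<alpha> \<beta> \<gamma> \<delta>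
    unfolding S_def spm by blast
  have VW: "sp \<alpha> \<beta> y ** (sp \<gamma> \<delta> y ** x1) \<in> S" for \<alpha> \<beta> \<gamma> \<delta>
    unfolding S_def matrix_mul_assoc spm by blast
  have WV: "(sp \<alpha> \<beta> y ** x1) ** sp \<gamma> \<delta> y \<in> S" for \<alpha> \<beta> \<gamma> \<delta>
    unfolding S_def matrix_mul_assoc[symmetric] facts(1) by (simp add: matrix_mul_assoc spm; blast)
  have WW: "(sp \<alpha> \<beta> y ** x1) ** (sp \<gamma> \<delta> y ** x1) \<in> S" for \<alpha> \<beta> \<gamma> \<delta>
  proof -
    have "(sp \<alpha> \<beta> y ** x1) ** (sp \<gamma> \<delta> y ** x1) = sp \<alpha> \<beta> y ** (x1 ** sp \<gamma> \<delta> y) ** x1"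
      by (simp add: matrix_mul_assoc)
    also have "\<dots> = sp \<alpha> \<beta> y ** sp (\<gamma> + \<delta>*tr2 y) (-\<delta>) y ** (x1 ** x1)"
      by (simp add: facts(1) matrix_mul_assoc)
    also have "\<dots> = sp \<alpha> \<beta> y ** sp (\<gamma> + \<delta>*tr2 y) (-\<delta>) y ** sp (-1) 0 y"
      by (simp add: facts(2))
    finally show ?thesis unfolding S_def spm by blast
  qed
  have sub: "X \<in> S" if "X \<in> generate SL2 {x1, x2}" for X
    using that
  proof (induct rule: generate.induct)
    case one then show ?case using facts(7) by (auto simp: S_def)
  next
    case (incl h) then show ?case using facts(3,4) by (auto simp: S_def)
  next
    case (inv h) then show ?case using facts(5,6) d1 d2 by (auto simp: S_def inv_SL2) blast+
  next
    case (eng u v)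
    from eng(2) obtain \<alpha> \<beta> where A: "u = sp \<alpha> \<beta> y \<or> u = sp \<alpha> \<beta> y ** x1" unfolding S_def by blast
    from eng(4) obtain \<gamma> \<delta> where B: "v = sp \<gamma> \<delta> y \<or> v = sp \<gamma> \<delta> y ** x1" unfolding S_def by blast
    from A B show ?case using VV VW WV WW by auto
  qed
  define z where "z = (if scal y then x1 else y)"
  have nz: "\<not> scal z" using ns by (simp add: z_def)
  have van: "tr2 X * ((X ** z) $ i $ j - (z ** X) $ i $ j) = 0" if XS: "X \<in> S" for X i j
  proof -
    consider \<alpha> \<beta> where "X = sp \<alpha> \<beta> y" | \<alpha> \<beta> where "X = sp \<alpha> \<beta> y ** x1" using XS unfolding S_def by blast
    then show ?thesis
    proof cases
      case 1
      then have "X ** z = z ** X"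
        using facts(8) facts(10) by (cases "scal y") (simp_all add: z_def)
      then show ?thesis by simp
    next
      case 2
      then have "tr2 X = 0" using facts(9) by simp
      then show ?thesis by simp
    qed
  qed
  obtain X i j where X: "det X = 1" "tr2 X * ((X ** z) $ i $ j - (z ** X) $ i $ j) \<noteq> 0"
    using witness_exists[OF nz inf] by blast
  show ?thesis
  proof
    assume "zariski_dense_SL2 (generate SL2 {x1, x2})"
    moreover have "\<forall>x\<in>generate SL2 {x1, x2}. tr2 x * ((x ** z) $ i $ j - (z ** x) $ i $ j) = 0"
      using sub van by blast
    ultimately have "tr2 X * ((X ** z) $ i $ j - (z ** X) $ i $ j) = 0"
      unfolding zariski_dense_SL2_def using mpf_witness_poly[of z i j] X(1) by (simp only: carrier_SL2 mem_Collect_eq Ball_def) blast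
    then show False using X(2) by simp
  qed
qed


subsection \<open>Polynomial curves\<close>

lemma pp_comp:
  fixes F :: "'k::field \<Rightarrow> 'k^2^2"
  assumes "p \<in> matrix_poly_fun" "\<And>i j. \<exists>q. \<forall>t. F t $ i $ j = poly q t"
  shows "\<exists>q. \<forall>t. p (F t) = poly q t"
  using assms(1)
proof induct
  case (const c) then show ?case by (intro exI[of _ "[:c:]"]) simp
next
  case (coord i j) then show ?case using assms(2) by simp
next
  case (add p q)
  then obtain q1 q2 where "\<forall>t. p (F t) = poly q1 t" "\<forall>t. q (F t) = poly q2 t" by blast
  then show ?case by (intro exI[of _ "q1 + q2"]) simp
next
  case (mult p q)
  then obtain q1 q2 where "\<forall>t. p (F t) = poly q1 t" "\<forall>t. q (F t) = poly q2 t" by blast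
  then show ?case by (intro exI[of _ "q1 * q2"]) simp
qed

lemma lp_comp:
  fixes F :: "'k::field \<Rightarrow> 'k^2^2"
  assumes "p \<in> matrix_poly_fun" "\<And>i j. \<exists>q N. \<forall>t. t \<noteq> 0 \<longrightarrow> t ^ N * F t $ i $ j = poly q t"
  shows "\<exists>q N. \<forall>t. t \<noteq> 0 \<longrightarrow> t ^ N * p (F t) = poly q t"
  using assms(1)
proof induct
  case (const c) then show ?case by (intro exI[of _ "[:c:]"] exI[of _ 0]) simp
next
  case (coord i j) then show ?case using assms(2) by simp
next
  case (add p q)
  obtain q1 N1 where h1: "\<forall>t. t \<noteq> 0 \<longrightarrow> t ^ N1 * p (F t) = poly q1 t" using add(2) by blast
  obtain q2 N2 where h2: "\<forall>t. t \<noteq> 0 \<longrightarrow> t ^ N2 * q (F t) = poly q2 t" using add(4) by blast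
  note h = h1 h2
  have "t ^ (N1 + N2) * (p (F t) + q (F t)) = poly (monom 1 N2 * q1 + monom 1 N1 * q2) t" if "t \<noteq> 0" for t
  proof -
    have "t ^ (N1 + N2) * (p (F t) + q (F t)) = t ^ N2 * (t ^ N1 * p (F t)) + t ^ N1 * (t ^ N2 * q (F t))"
      by (simp add: power_add algebra_simps)
    also have "\<dots> = poly (monom 1 N2 * q1 + monom 1 N1 * q2) t" using h that by (simp add: poly_monom)
    finally show ?thesis .
  qed
  then show ?case by blast
next
  case (mult p q)
  obtain q1 N1 where h1: "\<forall>t. t \<noteq> 0 \<longrightarrow> t ^ N1 * p (F t) = poly q1 t" using mult(2) by blast
  obtain q2 N2 where h2: "\<forall>t. t \<noteq> 0 \<longrightarrow> t ^ N2 * q (F t) = poly q2 t" using mult(4) by blast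
  note h = h1 h2
  have "t ^ (N1 + N2) * (p (F t) * q (F t)) = poly (q1 * q2) t" if "t \<noteq> 0" for t
  proof -
    have "t ^ (N1 + N2) * (p (F t) * q (F t)) = (t ^ N1 * p (F t)) * (t ^ N2 * q (F t))"
      by (simp add: power_add algebra_simps)
    also have "\<dots> = poly (q1 * q2) t" using h that by simp
    finally show ?thesis .
  qed
  then show ?case by blast
qed


lemma poly_zero_if_infinite_roots:
  fixes q :: "'k::field poly"
  assumes "infinite A" "\<And>t. t \<in> A \<Longrightarrow> poly q t = 0"
  shows "q = 0"
proof (rule ccontr)
  assume "q \<noteq> 0"
  then have "finite {t. poly q t = 0}" by (rule poly_roots_finite)
  moreover have "A \<subseteq> {t. poly q t = 0}" using assms(2) by blast
  ultimately show False using assms(1) finite_subset by blast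
qed

lemma finite_roots_of_unity: "n > 0 \<Longrightarrow> finite {z::'k::field. z ^ n = 1}"
proof -
  assume n: "n > 0"
  have "coeff (monom 1 n - 1 :: 'k poly) n = 1" using n by (simp add: coeff_1)
  then have "(monom 1 n - 1 :: 'k poly) \<noteq> 0" by (metis coeff_0 zero_neq_one)
  then have "finite {z. poly (monom 1 n - 1) z = (0::'k)}" by (rule poly_roots_finite)
  moreover have "{z. poly (monom 1 n - 1) z = (0::'k)} = {z. z ^ n = 1}"
    by (rule Collect_cong) (simp add: poly_monom)
  ultimately show ?thesis by (simp only:)
qed

lemma countable_roots_of_unity: "countable {z::'k::field. \<exists>n>0. z ^ n = 1}"
proof -
  have "{z::'k. \<exists>n>0. z ^ n = 1} = (\<Union>n\<in>{0<..}. {z. z ^ n = 1})" by auto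
  also have "countable \<dots>"
    by (rule countable_UN) (auto intro: countableI_type countable_finite finite_roots_of_unity)
  finally show ?thesis .
qed





lemma dense_main:
  fixes H :: "('k::alg_closed_field^2^2) set" and g :: "'k^2^2" and lam :: 'k
  assumes closed: "\<And>u v. u \<in> H \<Longrightarrow> v \<in> H \<Longrightarrow> u ** v \<in> H"
    and lam: "lam \<noteq> 0" "\<And>n. n > 0 \<Longrightarrow> lam ^ n \<noteq> 1"
    and tor: "\<And>n. mk (lam^n) 0 0 (inverse lam ^ n) \<in> H"
    and gH: "g \<in> H" "adj2 g \<in> H" and dg: "det g = 1"
    and gnz: "g$1$1 \<noteq> 0" "g$1$2 \<noteq> 0" "g$2$1 \<noteq> 0" "g$2$2 \<noteq> 0"
    and inf: "infinite (UNIV::'k set)"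
  shows "zariski_dense_SL2 H"
proof -
  define K where "K = {X. \<forall>p\<in>matrix_poly_fun. (\<forall>x\<in>H. p x = 0) \<longrightarrow> p X = 0}"
  have HK: "x \<in> K" if "x \<in> H" for x using that by (simp add: K_def)
  have KD: "p Y = 0" if "Y \<in> K" "p \<in> matrix_poly_fun" "\<forall>x\<in>H. p x = 0" for Y p
    using that by (simp add: K_def)
  have K1: "h ** Y \<in> K" if h: "h \<in> H" and Y: "Y \<in> K" for h Y
    unfolding K_def
  proof (intro CollectI ballI impI)
    fix p :: "'k^2^2 \<Rightarrow> 'k" assume p: "p \<in> matrix_poly_fun" and van: "\<forall>x\<in>H. p x = 0"
    have q: "(\<lambda>Z. p (h ** Z)) \<in> matrix_poly_fun" by (rule mpf_comp[OF p mpf_lmul])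
    have "\<forall>x\<in>H. (\<lambda>Z. p (h ** Z)) x = 0" using closed[OF h] van by blast
    then show "p (h ** Y) = 0" using KD[OF Y q] by simp
  qed
  have K2: "X ** Y \<in> K" if X: "X \<in> K" and Y: "Y \<in> K" for X Y
    unfolding K_def
  proof (intro CollectI ballI impI)
    fix p :: "'k^2^2 \<Rightarrow> 'k" assume p: "p \<in> matrix_poly_fun" and van: "\<forall>x\<in>H. p x = 0"
    have q: "(\<lambda>Z. p (Z ** Y)) \<in> matrix_poly_fun" by (rule mpf_comp[OF p mpf_rmul])
    have "\<forall>x\<in>H. (\<lambda>Z. p (Z ** Y)) x = 0"
    proof
      fix x assume "x \<in> H"
      then have "x ** Y \<in> K" using K1 Y by blast
      then show "(\<lambda>Z. p (Z ** Y)) x = 0" using KD[OF _ p van] by simp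
    qed
    then show "p (X ** Y) = 0" using KD[OF X q] by simp
  qed
  have torK: "mk t 0 0 (inverse t) \<in> K" if t: "t \<noteq> 0" for t
    unfolding K_def
  proof (intro CollectI ballI impI)
    fix p :: "'k^2^2 \<Rightarrow> 'k" assume p: "p \<in> matrix_poly_fun" and van: "\<forall>x\<in>H. p x = 0"
    define F where "F = (\<lambda>t::'k. mk t 0 0 (inverse t))"
    have ent: "\<exists>q N. \<forall>t. t \<noteq> 0 \<longrightarrow> t ^ N * F t $ i $ j = poly q t" for i j
    proof -
      have "\<exists>q N. \<forall>t. t \<noteq> 0 \<longrightarrow> t ^ N * F t $ 1 $ 1 = poly q t"
        by (intro exI[of _ "[:0,1:]"] exI[of _ 0]) (simp add: F_def)
      moreover have "\<exists>q N. \<forall>t. t \<noteq> 0 \<longrightarrow> t ^ N * F t $ 1 $ 2 = poly q t"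
        by (intro exI[of _ "0"] exI[of _ 0]) (simp add: F_def)
      moreover have "\<exists>q N. \<forall>t. t \<noteq> 0 \<longrightarrow> t ^ N * F t $ 2 $ 1 = poly q t"
        by (intro exI[of _ "0"] exI[of _ 0]) (simp add: F_def)
      moreover have "\<exists>q N. \<forall>t. t \<noteq> 0 \<longrightarrow> t ^ N * F t $ 2 $ 2 = poly q t"
        by (intro exI[of _ "[:1:]"] exI[of _ 1]) (simp add: F_def)
      ultimately show ?thesis using exhaust_2[of i] exhaust_2[of j] by (elim disjE; simp only:)
    qed
    obtain q N where qN: "\<forall>t. t \<noteq> 0 \<longrightarrow> t ^ N * p (F t) = poly q t"
      using lp_comp[OF p ent] by blast
    have inj: "inj (\<lambda>n. lam ^ n)"
    proof (rule linorder_injI)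
      fix n m :: nat assume nm: "n < m"
      show "lam ^ n \<noteq> lam ^ m"
      proof
        assume eq: "lam ^ n = lam ^ m"
        have "lam ^ m = lam ^ n * lam ^ (m - n)" using nm by (simp add: power_add[symmetric])
        then have "lam ^ (m - n) = 1" using eq lam(1) by simp
        then show False using lam(2)[of "m - n"] nm by simp
      qed
    qed
    have "q = 0"
    proof (rule poly_zero_if_infinite_roots)
      show "infinite (range (\<lambda>n. lam ^ n))" using range_inj_infinite[OF inj] .
      fix x assume "x \<in> range (\<lambda>n. lam ^ n)"
      then obtain n where n: "x = lam ^ n" by blast
      have "F x \<in> H" unfolding F_def n using tor[of n] by (simp add: power_inverse)
      then have "p (F x) = 0" using van by blast
      moreover have "x \<noteq> 0" using n lam(1) by simp
      moreover have "x ^ N * p (F x) = poly q x" using qN \<open>x \<noteq> 0\<close> by blast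
      ultimately show "poly q x = 0" by simp
    qed
    then have "t ^ N * p (F t) = 0" using qN t by simp
    then show "p (mk t 0 0 (inverse t)) = 0" using t by (simp add: F_def)
  qed
  obtain a b c e where g: "g = mk a b c e" using mk_cases by blast
  have nz: "a \<noteq> 0" "b \<noteq> 0" "c \<noteq> 0" "e \<noteq> 0" using gnz g by simp_all
  have dge: "a * e - b * c = 1" using dg g by simp
  have genK: "X \<in> K" if dX: "det X = 1" and Xnz: "X$1$1 \<noteq> 0" "X$1$2 \<noteq> 0" "X$2$1 \<noteq> 0" "X$2$2 \<noteq> 0" for X
  proof -
    obtain x11 x12 x21 x22 where X: "X = mk x11 x12 x21 x22" using mk_cases by blast
    have xnz: "x11 \<noteq> 0" "x12 \<noteq> 0" "x21 \<noteq> 0" "x22 \<noteq> 0" using Xnz X by simp_all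
    have dx: "x11 * x22 - x12 * x21 = 1" using dX X by simp
    define A where "A = a * e"
    define B where "B = b * c"
    define P where "P = x11 * x22"
    have ABnz: "A * B \<noteq> 0" using nz by (simp add: A_def B_def)
    have Pnz: "P \<noteq> 0" using xnz by (simp add: P_def)
    have P1: "P - 1 = x12 * x21" using dx by (simp add: P_def algebra_simps)
    have P1nz: "P \<noteq> 1" using P1 xnz by auto
    have "\<exists>x::'k. (\<Sum>k\<le>2. (\<lambda>k. if k = 0 then - (A*B) else if k = 1 then A*A+B*B-P else - (A*B)) k * x ^ k) = 0"
      by (rule alg_closed) (use ABnz in auto)
    then obtain r where r0: "(\<Sum>k\<le>2. (\<lambda>k. if k = 0 then - (A*B) else if k = 1 then A*A+B*B-P else - (A*B)) k * r ^ k) = 0"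
      by blast
    have r: "- (A*B) + (A*A+B*B-P) * r + (- (A*B)) * r^2 = 0"
      using r0 by (simp add: eval_nat_numeral)
    have rnz: "r \<noteq> 0" using r ABnz by auto
    obtain s where s: "s^2 = r" using nth_root_exists[of 2 r] by auto
    have snz: "s \<noteq> 0" using s rnz by auto
    define i where "i = inverse s"
    have si: "s * i = 1" using snz by (simp add: i_def)
    define E where "E = g ** mk s 0 0 (inverse s) ** adj2 g"
    have EK: "E \<in> K" unfolding E_def by (intro K2 HK gH torK snz)
    have Eform: "E = mk (A * s - B*i) (a*b*(i - s)) (c*e*(s - i)) (A*i - B * s)"
      unfolding E_def g i_def A_def B_def by (simp add: mk_eq_iff algebra_simps)
    have dE: "det E = 1" unfolding E_def using dg snz by (simp add: det_mul)
    have EP: "(A * s - B*i) * (A*i - B * s) = P"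
    proof -
      have rs: "r = s * s" using s by (simp add: power2_eq_square)
      show ?thesis using si rs r by algebra
    qed
    have E12: "a*b*(i - s) \<noteq> 0"
    proof
      assume "a*b*(i - s) = 0"
      then have "i = s" using nz by simp
      then have "r = 1" using si s by (simp add: power2_eq_square)
      then have "(A - B) * (A - B) = P" using r by algebra
      moreover have "A - B = 1" using dge by (simp add: A_def B_def)
      ultimately show False using P1nz by simp
    qed
    have E11: "A * s - B*i \<noteq> 0" using EP Pnz by auto
    have Edet: "(a*b*(i - s)) * (c*e*(s - i)) = P - 1"
      using dE EP unfolding Eform by simp algebra
    define \<alpha> where "\<alpha> = x11 / (A * s - B*i)"
    define \<beta> where "\<beta> = x12 / (a*b*(i - s))"
    have \<alpha>nz: "\<alpha> \<noteq> 0" and \<beta>nz: "\<beta> \<noteq> 0" using E11 E12 xnz by (simp_all add: \<alpha>_def \<beta>_def)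
    obtain t where t: "t^2 = \<alpha> * \<beta>" using nth_root_exists[of 2 "\<alpha> * \<beta>"] by auto
    have tnz: "t \<noteq> 0" using t \<alpha>nz \<beta>nz by auto
    define u where "u = t / \<beta>"
    have unz: "u \<noteq> 0" using tnz \<beta>nz by (simp add: u_def)
    have YK: "mk t 0 0 (inverse t) ** E ** mk u 0 0 (inverse u) \<in> K"
      by (intro K2 EK torK tnz unz)
    have tu: "t * u = \<alpha>" using t \<beta>nz by (simp add: u_def power2_eq_square)
    have tiu: "t * inverse u = \<beta>" using tnz \<beta>nz by (simp add: u_def)
    have "mk t 0 0 (inverse t) ** E ** mk u 0 0 (inverse u) = X"
    proof -
      have e1: "t * (A * s - B*i) * u = x11"
      proof -
        have "t * (A * s - B*i) * u = (t * u) * (A * s - B*i)" by (simp only: mult_ac)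
        also have "\<dots> = x11" using tu E11 by (simp add: \<alpha>_def)
        finally show ?thesis .
      qed
      have e2: "t * (a*b*(i - s)) * inverse u = x12"
      proof -
        have "t * (a*b*(i - s)) * inverse u = (t * inverse u) * (a*b*(i - s))" by (simp only: mult_ac)
        also have "\<dots> = x12" using tiu E12 by (simp add: \<beta>_def)
        finally show ?thesis .
      qed
      have e3: "inverse t * (c*e*(s - i)) * u = x21"
      proof -
        have "inverse t * u = inverse \<beta>" using tnz by (simp add: u_def divide_inverse)
        then have "inverse t * (c*e*(s - i)) * u = (c*e*(s - i)) / \<beta>" by (simp add: algebra_simps divide_inverse)
        also have "\<dots> = (c*e*(s - i)) * (a*b*(i - s)) / x12" using E12 xnz by (simp add: \<beta>_def)
        also have "\<dots> = (P - 1) / x12" using Edet by (simp add: algebra_simps)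
        also have "\<dots> = x21" using P1 xnz by simp
        finally show ?thesis .
      qed
      have e4: "inverse t * (A*i - B * s) * inverse u = x22"
      proof -
        have "inverse t * inverse u = inverse \<alpha>" using tu by (metis inverse_mult_distrib mult.commute)
        then have "inverse t * (A*i - B * s) * inverse u = (A*i - B * s) / \<alpha>" by (simp add: algebra_simps divide_inverse)
        also have "\<dots> = (A * s - B*i) * (A*i - B * s) / x11" using E11 xnz by (simp add: \<alpha>_def)
        also have "\<dots> = P / x11" using EP by simp
        also have "\<dots> = x22" using xnz by (simp add: P_def)
        finally show ?thesis .
      qed
      show ?thesis unfolding Eform X using e1 e2 e3 e4 by (simp add: mk_eq_iff algebra_simps)
    qed
    then show ?thesis using YK by simp
  qed
  have allK: "X \<in> K" if dX: "det X = 1" for X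
    unfolding K_def
  proof (intro CollectI ballI impI)
    fix p :: "'k^2^2 \<Rightarrow> 'k" assume p: "p \<in> matrix_poly_fun" and van: "\<forall>x\<in>H. p x = 0"
    define F where "F = (\<lambda>t::'k. X ** mk (1 + t*t) t t 1)"
    have Fent: "F t $ i $ 1 = poly [:X$i$1, X$i$2, X$i$1:] t" "F t $ i $ 2 = poly [:X$i$2, X$i$1:] t" for t i
    proof -
      obtain x11 x12 x21 x22 where X: "X = mk x11 x12 x21 x22" using mk_cases by blast
      show "F t $ i $ 1 = poly [:X$i$1, X$i$2, X$i$1:] t" "F t $ i $ 2 = poly [:X$i$2, X$i$1:] t"
        unfolding F_def X using exhaust_2[of i] by (auto simp: algebra_simps)
    qed
    have ent: "\<exists>q. \<forall>t. F t $ i $ j = poly q t" for i j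
      using exhaust_2[of j] by (elim disjE; simp only: Fent; blast)
    obtain q where q: "\<forall>t. p (F t) = poly q t" using pp_comp[OF p ent] by blast
    have dF: "det (F t) = 1" for t using dX unfolding F_def by (simp add: det_mul)
    have row: "X$i$1 \<noteq> 0 \<or> X$i$2 \<noteq> 0" for i
    proof (rule ccontr)
      assume "\<not> (X$i$1 \<noteq> 0 \<or> X$i$2 \<noteq> 0)"
      then have "det X = 0" using exhaust_2[of i] by (auto simp: det_2)
      then show False using dX by simp
    qed
    define Q where "Q = [:X$1$1, X$1$2, X$1$1:] * [:X$1$2, X$1$1:] * [:X$2$1, X$2$2, X$2$1:] * [:X$2$2, X$2$1:]"
    have "[:X$i$1, X$i$2, X$i$1:] \<noteq> 0" "[:X$i$2, X$i$1:] \<noteq> 0" for i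
      using row[of i] by auto
    then have Qnz: "Q \<noteq> 0" unfolding Q_def by (simp only: mult_eq_0_iff de_Morgan_disj) simp
    have "q = 0"
    proof (rule poly_zero_if_infinite_roots)
      show "infinite (UNIV - {t. poly Q t = 0})"
        using inf poly_roots_finite[OF Qnz] by (rule Diff_infinite_finite[rotated])
      fix t assume "t \<in> UNIV - {t. poly Q t = 0}"
      then have "poly Q t \<noteq> 0" by simp
      then have "F t $ 1 $ 1 \<noteq> 0" "F t $ 1 $ 2 \<noteq> 0" "F t $ 2 $ 1 \<noteq> 0" "F t $ 2 $ 2 \<noteq> 0"
        using \<open>poly Q t \<noteq> 0\<close> unfolding Q_def Fent by (simp_all only: poly_mult mult_eq_0_iff de_Morgan_disj not_False_eq_True)
      then have "F t \<in> K" using genK[OF dF] by blast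
      then have "p (F t) = 0" using KD[OF _ p van] by blast
      then show "poly q t = 0" using q by simp
    qed
    then have "p (F 0) = 0" using q by simp
    moreover have "F 0 = X" unfolding F_def by (simp add: mat1_mk[symmetric])
    ultimately show "p X = 0" by simp
  qed
  show ?thesis unfolding zariski_dense_SL2_def
  proof (intro ballI impI)
    fix p :: "'k^2^2 \<Rightarrow> 'k" and x :: "'k^2^2" assume "p \<in> matrix_poly_fun" "\<forall>x\<in>H. p x = 0" "x \<in> carrier SL2"
    then show "p x = 0" using allK[of x] KD by simp
  qed
qed



lemma scal_comm: "scal M \<Longrightarrow> M ** N = N ** (M::'k::comm_ring_1^2^2)"
  by (cases M rule: mk_cases, cases N rule: mk_cases) (simp add: scal_def mk_eq_iff mult.commute)

lemma conj_from_P: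
  fixes P C A :: "'k::alg_closed_field^2^2"
  assumes dP: "det P \<noteq> 0" and PC: "P ** C = A ** P"
  shows "\<exists>g. det g = 1 \<and> A = g ** C ** adj2 g"
proof -
  obtain \<sigma> where \<sigma>: "\<sigma>^2 = det P" using nth_root_exists[of 2 "det P"] by auto
  have \<sigma>nz: "\<sigma> \<noteq> 0" using \<sigma> dP by auto
  obtain p11 p12 p21 p22 where P: "P = mk p11 p12 p21 p22" using mk_cases by blast
  define g where "g = mk (p11 / \<sigma>) (p12 / \<sigma>) (p21 / \<sigma>) (p22 / \<sigma>)"
  have dg: "det g = 1"
  proof -
    have "det g = (p11*p22 - p12*p21) / (\<sigma> * \<sigma>)" unfolding g_def by (simp add: diff_divide_distrib)
    moreover have "\<sigma> * \<sigma> = p11*p22 - p12*p21" using \<sigma> P by (simp add: power2_eq_square)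
    ultimately have "det g = (\<sigma> * \<sigma>) / (\<sigma> * \<sigma>)" by (simp only:)
    then show ?thesis using \<sigma>nz by simp
  qed
  have gC: "g ** C = A ** g"
  proof -
    obtain c11 c12 c21 c22 where C: "C = mk c11 c12 c21 c22" using mk_cases by blast
    obtain a11 a12 a21 a22 where A: "A = mk a11 a12 a21 a22" using mk_cases by blast
    have "p11 * c11 + p12 * c21 = a11 * p11 + a12 * p21"
         "p11 * c12 + p12 * c22 = a11 * p12 + a12 * p22"
         "p21 * c11 + p22 * c21 = a21 * p11 + a22 * p21"
         "p21 * c12 + p22 * c22 = a21 * p12 + a22 * p22"
      using PC unfolding P C A by (simp_all add: mk_eq_iff)
    then show ?thesis unfolding g_def C A using \<sigma>nz by (simp add: mk_eq_iff field_simps)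
  qed
  have "A = A ** (g ** adj2 g)" using adj2_mult(1)[OF dg] by simp
  also have "\<dots> = g ** C ** adj2 g" by (simp add: matrix_mul_assoc gC)
  finally show ?thesis using dg by blast
qed

definition comp2 :: "'k::comm_ring_1 \<Rightarrow> 'k^2^2" where "comp2 \<tau> = mk 0 (-1) 1 \<tau>"

lemma to_companion:
  fixes A :: "'k::alg_closed_field^2^2"
  assumes dA: "det A = 1" and ns: "\<not> scal A"
  shows "\<exists>g. det g = 1 \<and> A = g ** comp2 (tr2 A) ** adj2 g"
proof -
  obtain p q r w where A: "A = mk p q r w" using mk_cases by blast
  have d: "p * w - q * r = 1" using dA A by simp
  consider "r \<noteq> 0" | "r = 0" "q \<noteq> 0" | "r = 0" "q = 0" "p \<noteq> w" using ns A by (auto simp: scal_def)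
  then show ?thesis
  proof cases
    case 1
    have "mk 1 p 0 r ** comp2 (tr2 A) = A ** mk 1 p 0 r"
      unfolding A comp2_def tr2_def using d by (simp add: mk_eq_iff; intro conjI; ((simp add: algebra_simps; fail) | algebra))
    moreover have "det (mk 1 p 0 r) \<noteq> 0" using 1 by simp
    ultimately show ?thesis using conj_from_P by blast
  next
    case 2
    have pw: "p * w = 1" using d 2 by simp
    have "mk 0 q 1 w ** comp2 (tr2 A) = A ** mk 0 q 1 w"
      unfolding A comp2_def tr2_def using pw 2 by (simp add: mk_eq_iff algebra_simps)
    moreover have "det (mk 0 q 1 w) \<noteq> 0" using 2 by simp
    ultimately show ?thesis using conj_from_P by blast
  next
    case 3
    have pw: "p * w = 1" using d 3 by simp
    have "mk 1 p 1 w ** comp2 (tr2 A) = A ** mk 1 p 1 w"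
      unfolding A comp2_def tr2_def using pw 3 by (simp add: mk_eq_iff algebra_simps)
    moreover have "det (mk 1 p 1 w) \<noteq> 0" using 3 by simp
    ultimately show ?thesis using conj_from_P by blast
  qed
qed

lemma conj_same_trace:
  fixes A B :: "'k::alg_closed_field^2^2"
  assumes "det A = 1" "det B = 1" "\<not> scal A" "\<not> scal B" "tr2 A = tr2 B"
  shows "B \<in> conj_class SL2 A"
proof -
  define C where "C = comp2 (tr2 A)"
  obtain g where g: "det g = 1" "A = g ** C ** adj2 g" using to_companion assms unfolding C_def by blast
  obtain h where h: "det h = 1" "B = h ** C ** adj2 h" using to_companion assms unfolding C_def by metis
  define k where "k = h ** adj2 g"
  have dk: "det k = 1" using g h by (simp add: k_def det_mul)
  have ak: "adj2 k = g ** adj2 h" unfolding k_def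
    by (cases g rule: mk_cases, cases h rule: mk_cases) (simp add: mk_eq_iff algebra_simps)
  have "k ** A ** adj2 k = h ** (adj2 g ** g) ** C ** (adj2 g ** g) ** adj2 h"
    unfolding ak unfolding k_def g(2) by (simp add: matrix_mul_assoc)
  also have "\<dots> = B" using adj2_mult(2)[OF g(1)] h(2) by simp
  finally show ?thesis using dk assms(1) by (auto simp: conj_class_iff)
qed



lemma finite_lin: assumes "\<tau>1 \<noteq> 0 \<or> \<tau>2 \<noteq> 0" shows "finite {z::'k::field. \<tau>2 = \<tau>1 * z}"
proof (cases "\<tau>1 = 0")
  case True then show ?thesis using assms by simp
next
  case False
  then have "{z::'k. \<tau>2 = \<tau>1 * z} \<subseteq> {\<tau>2 / \<tau>1}" by (auto simp: field_simps)
  then show ?thesis using finite_subset by blast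
qed

lemma construct:
  fixes \<tau>1 \<tau>2 :: "'k::alg_closed_field"
  assumes unc: "uncountable (UNIV::'k set)" and nz: "\<tau>1 \<noteq> 0 \<or> \<tau>2 \<noteq> 0"
  obtains x1 x2 l where "det x1 = 1" "det x2 = 1" "tr2 x1 = \<tau>1" "tr2 x2 = \<tau>2" "\<not> scal x1" "\<not> scal x2"
    "x1 ** x2 = mk l 0 0 (inverse l)" "l \<noteq> 0" "\<forall>n>0. l ^ n \<noteq> 1"
    "x1$1$1 \<noteq> 0" "x1$1$2 \<noteq> 0" "x1$2$1 \<noteq> 0" "x1$2$2 \<noteq> 0"
proof -
  define Q where "Q = [:1, -(\<tau>1*\<tau>2), \<tau>1*\<tau>1+\<tau>2*\<tau>2-2, -(\<tau>1*\<tau>2), 1:]"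
  have Qnz: "Q \<noteq> 0" unfolding Q_def by simp
  have polyQ: "poly Q z = (1 - z*z) * (1 - z*z) - z * (\<tau>2 - \<tau>1*z) * (\<tau>1 - \<tau>2*z)" for z
    unfolding Q_def by simp algebra
  define bad where "bad = {z::'k. \<exists>n>0. z ^ n = 1} \<union> {0} \<union> {z. \<tau>2 = \<tau>1 * z} \<union> {z. \<tau>1 = \<tau>2 * z}
     \<union> {z. poly Q z = 0}"
  have c3: "countable {z::'k. \<tau>2 = \<tau>1 * z}" using finite_lin[OF nz] by (rule countable_finite)
  have c4: "countable {z::'k. \<tau>1 = \<tau>2 * z}" using finite_lin[of \<tau>2 \<tau>1] nz by (intro countable_finite) auto
  have c5: "countable {z. poly Q z = 0}" using poly_roots_finite[OF Qnz] by (rule countable_finite)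
  have "countable bad" unfolding bad_def
    by (intro countable_Un countable_roots_of_unity c3 c4 c5 countable_finite finite.intros)
  then have "\<not> UNIV \<subseteq> bad" using unc countable_subset by blast
  then obtain l where l: "l \<notin> bad" by blast
  have lnz: "l \<noteq> 0" and lroot: "\<forall>n>0. l ^ n \<noteq> 1" and l1: "\<tau>2 \<noteq> \<tau>1 * l" and l2: "\<tau>1 \<noteq> \<tau>2 * l"
    and l3: "(1 - l*l) * (1 - l*l) \<noteq> l * (\<tau>2 - \<tau>1*l) * (\<tau>1 - \<tau>2*l)"
  proof -
    have L: "l \<notin> {z::'k. \<exists>n>0. z ^ n = 1}" "l \<notin> {0}" "l \<notin> {z. \<tau>2 = \<tau>1 * z}"
      "l \<notin> {z. \<tau>1 = \<tau>2 * z}" "l \<notin> {z. poly Q z = 0}"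
      using l unfolding bad_def by (simp_all only: Un_iff de_Morgan_disj not_False_eq_True)
    show "l \<noteq> 0" using L(2) by simp
    show "\<forall>n>0. l ^ n \<noteq> 1"
    proof (intro allI impI)
      fix n :: nat assume n0: "n > 0"
      have "\<not> (\<exists>n>0. l ^ n = 1)" using L(1) by (simp only: mem_Collect_eq not_False_eq_True)
      then show "l ^ n \<noteq> 1" using n0 by blast
    qed
    show "\<tau>2 \<noteq> \<tau>1 * l" using L(3) by simp
    show "\<tau>1 \<noteq> \<tau>2 * l" using L(4) by simp
    show "(1 - l*l) * (1 - l*l) \<noteq> l * (\<tau>2 - \<tau>1*l) * (\<tau>1 - \<tau>2*l)" using L(5) polyQ[of l] by simp
  qed
  have "l ^ 2 \<noteq> 1" using lroot by simp
  then have mnz: "1 - l*l \<noteq> 0" by (simp add: power2_eq_square)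
  define m where "m = 1 - l*l"
  define a where "a = l * (\<tau>2 - \<tau>1*l) / m"
  have am: "a * m = l * (\<tau>2 - \<tau>1*l)" using mnz by (simp add: a_def m_def)
  have bm: "(\<tau>1 - a) * m = \<tau>1 - \<tau>2 * l" using am unfolding m_def by algebra
  define c where "c = a * (\<tau>1 - a) - 1"
  define x1 where "x1 = mk a 1 c (\<tau>1 - a)"
  define D where "D = mk l 0 0 (inverse l)"
  define x2 where "x2 = adj2 x1 ** D"
  have d1: "det x1 = 1" by (simp add: x1_def c_def)
  have d2: "det x2 = 1" using d1 lnz by (simp add: x2_def D_def det_mul)
  have t1: "tr2 x1 = \<tau>1" by (simp add: x1_def tr2_def)
  have t2: "tr2 x2 = \<tau>2"
  proof -
    have il: "l * inverse l = 1" using lnz by simp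
    have "tr2 x2 = (\<tau>1 - a) * l + a * inverse l" by (simp add: x2_def x1_def D_def tr2_def)
    also have "\<dots> = \<tau>2" using il am unfolding m_def by algebra
    finally show ?thesis .
  qed
  have ns1: "\<not> scal x1" by (simp add: x1_def scal_def)
  have ns2: "\<not> scal x2" using lnz by (simp add: x2_def x1_def D_def scal_def)
  have prod: "x1 ** x2 = D" unfolding x2_def by (simp add: matrix_mul_assoc adj2_mult(1)[OF d1])
  have anz: "a \<noteq> 0"
  proof
    assume "a = 0"
    then have "l * (\<tau>2 - \<tau>1*l) = 0" using am by simp
    then show False using lnz l1 by simp
  qed
  have bnz: "\<tau>1 - a \<noteq> 0"
  proof
    assume "\<tau>1 - a = 0"
    then have "\<tau>1 - \<tau>2 * l = 0" using bm by simp
    then show False using l2 by simp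
  qed
  have cnz: "c \<noteq> 0"
  proof
    assume "c = 0"
    then have "a * (\<tau>1 - a) = 1" by (simp add: c_def)
    then have "(a * m) * ((\<tau>1 - a) * m) = m * m" by algebra
    then have "(l * (\<tau>2 - \<tau>1*l)) * (\<tau>1 - \<tau>2 * l) = m * m" unfolding am bm .
    then show False using l3 unfolding m_def by (simp add: mult.assoc)
  qed
  show ?thesis
    by (rule that[OF d1 d2 t1 t2 ns1 ns2 prod[unfolded D_def] lnz lroot])
      (use anz bnz cnz in \<open>simp_all add: x1_def\<close>)
qed



lemma class_facts:
  fixes C :: "('k::field^2^2) set"
  assumes "is_conj_class SL2 C" "\<not> C \<subseteq> grp_center SL2"
  shows "\<exists>x0. det x0 = 1 \<and> \<not> scal x0 \<and> C = conj_class SL2 x0 \<and> (\<forall>x\<in>C. det x = 1 \<and> \<not> scal x \<and> tr2 x = tr2 x0)"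
proof -
  obtain x0 where x0: "det x0 = 1" "C = conj_class SL2 x0" using assms(1) unfolding is_conj_class_def by auto
  have mem: "\<exists>g. det g = 1 \<and> x = g ** x0 ** adj2 g" if "x \<in> C" for x
    using that x0 conj_class_iff[of x0 x] by simp
  have ns0: "\<not> scal x0"
  proof
    assume sc: "scal x0"
    have "x = x0" if xC': "x \<in> C" for x
    proof -
      obtain g where g: "det g = 1" "x = g ** x0 ** adj2 g" using mem[OF xC'] by blast
      have "x = x0 ** (g ** adj2 g)" unfolding g(2) using scal_comm[OF sc, of g] by (simp add: matrix_mul_assoc)
      then show ?thesis using adj2_mult(1)[OF g(1)] by simp
    qed
    then have "C \<subseteq> grp_center SL2" using x0(1) sc center_SL2 by blast
    then show False using assms(2) by simp
  qed
  have "det x = 1 \<and> \<not> scal x \<and> tr2 x = tr2 x0" if xC: "x \<in> C" for x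
  proof -
    obtain g where g: "det g = 1" "x = g ** x0 ** adj2 g" using mem[OF xC] by blast
    have dx: "det x = 1" using g x0(1) by (simp add: det_mul)
    have tx: "tr2 x = tr2 x0"
    proof -
      obtain p q r w where G: "g = mk p q r w" using mk_cases by blast
      obtain a b c d where X0: "x0 = mk a b c d" using mk_cases by blast
      have "p * w - q * r = 1" using g(1) G by simp
      then show ?thesis unfolding g(2) G X0 tr2_def by simp algebra
    qed
    have nsx: "\<not> scal x"
    proof
      assume sc: "scal x"
      have "adj2 g ** x ** g = (adj2 g ** g) ** x0 ** (adj2 g ** g)"
        unfolding g(2) by (simp only: matrix_mul_assoc)
      then have "x0 = adj2 g ** x ** g" using adj2_mult(2)[OF g(1)] by simp
      also have "\<dots> = x ** (adj2 g ** g)" using scal_comm[OF sc, of "adj2 g"] by (simp add: matrix_mul_assoc)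
      also have "\<dots> = x" using adj2_mult(2)[OF g(1)] by simp
      finally show False using sc ns0 by simp
    qed
    show ?thesis using dx tx nsx by blast
  qed
  then show ?thesis using x0 ns0 by blast
qed

lemma inv_class_iff:
  fixes C :: "('k::field^2^2) set"
  assumes "det x0 = 1" "\<not> scal x0" "C = conj_class SL2 x0" "\<forall>x\<in>C. det x = 1 \<and> \<not> scal x \<and> tr2 x = tr2 x0"
  shows "involution_mod_center_class SL2 C \<longleftrightarrow> tr2 x0 = 0"
proof
  assume inv: "involution_mod_center_class SL2 C"
  have a1: "adj2 (mat 1) = (mat 1 :: 'k^2^2)" by (simp add: mat1_mk)
  have "x0 \<in> C" using assms(1,3) conj_class_iff[of x0 x0]
    by (auto intro!: exI[of _ "mat 1"] simp: a1)
  then have "x0 ** x0 \<in> grp_center SL2" using inv unfolding involution_mod_center_class_def by simp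
  then have "scal (x0 ** x0)" by (simp add: center_SL2)
  then show "tr2 x0 = 0" using sq_central_trace0 assms(1,2) by blast
next
  assume t: "tr2 x0 = 0"
  show "involution_mod_center_class SL2 C"
    unfolding involution_mod_center_class_def
  proof
    fix x assume "x \<in> C"
    then have x: "det x = 1" "\<not> scal x" "tr2 x = 0" using assms(4) t by auto
    have "x ** x = mk (-1) 0 0 (-1)" using trace0_sq x by blast
    moreover have "det (mk (-1) 0 0 (-1 :: 'k)) = 1" "scal (mk (-1) 0 0 (-1 :: 'k))" by (simp_all add: scal_def)
    ultimately show "x \<notin> grp_center SL2 \<and> x \<otimes>\<^bsub>SL2\<^esub> x \<in> grp_center SL2"
      using x by (simp add: center_SL2)
  qed
qed

theorem lemma3p10:
  fixes C1 C2 :: "('k::alg_closed_field ^2^2) set"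
  assumes "uncountable (UNIV :: 'k set)"
    and "is_conj_class SL2 C1" and "is_conj_class SL2 C2"
    and "\<not> C1 \<subseteq> grp_center SL2" and "\<not> C2 \<subseteq> grp_center SL2"
  shows "(\<exists>x1 \<in> C1. \<exists>x2 \<in> C2. zariski_dense_SL2 (generate SL2 {x1, x2}))
     \<longleftrightarrow> \<not> (involution_mod_center_class SL2 C1 \<and> involution_mod_center_class SL2 C2)"
proof -
  have inf: "infinite (UNIV :: 'k set)" using assms(1) uncountable_infinite by blast
  obtain y1 where y1: "det y1 = 1" "\<not> scal y1" "C1 = conj_class SL2 y1" "\<forall>x\<in>C1. det x = 1 \<and> \<not> scal x \<and> tr2 x = tr2 y1"
    using class_facts[OF assms(2,4)] by blast
  obtain y2 where y2: "det y2 = 1" "\<not> scal y2" "C2 = conj_class SL2 y2" "\<forall>x\<in>C2. det x = 1 \<and> \<not> scal x \<and> tr2 x = tr2 y2"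
    using class_facts[OF assms(3,5)] by blast
  note i1 = inv_class_iff[OF y1] and i2 = inv_class_iff[OF y2]
  show ?thesis
  proof
    assume "\<exists>x1 \<in> C1. \<exists>x2 \<in> C2. zariski_dense_SL2 (generate SL2 {x1, x2})"
    then obtain x1 x2 where x: "x1 \<in> C1" "x2 \<in> C2" "zariski_dense_SL2 (generate SL2 {x1, x2})" by blast
    show "\<not> (involution_mod_center_class SL2 C1 \<and> involution_mod_center_class SL2 C2)"
    proof
      assume "involution_mod_center_class SL2 C1 \<and> involution_mod_center_class SL2 C2"
      then have "tr2 y1 = 0" "tr2 y2 = 0" using i1 i2 by simp_all
      then have "det x1 = 1" "det x2 = 1" "tr2 x1 = 0" "tr2 x2 = 0" "\<not> scal x1"
        using y1(4) y2(4) x(1,2) by auto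
      then show False using not_dense[OF _ _ _ _ _ inf] x(3) by blast
    qed
  next
    assume "\<not> (involution_mod_center_class SL2 C1 \<and> involution_mod_center_class SL2 C2)"
    then have nz: "tr2 y1 \<noteq> 0 \<or> tr2 y2 \<noteq> 0" using i1 i2 by simp
    obtain x1 x2 l where c: "det x1 = 1" "det x2 = 1" "tr2 x1 = tr2 y1" "tr2 x2 = tr2 y2" "\<not> scal x1" "\<not> scal x2"
      "x1 ** x2 = mk l 0 0 (inverse l)" "l \<noteq> 0" "\<forall>n>0. l ^ n \<noteq> 1"
      "x1$1$1 \<noteq> 0" "x1$1$2 \<noteq> 0" "x1$2$1 \<noteq> 0" "x1$2$2 \<noteq> 0"
      using construct[OF assms(1) nz] by blast
    have m1: "x1 \<in> C1" using conj_same_trace[of y1 x1] y1 c by simp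
    have m2: "x2 \<in> C2" using conj_same_trace[of y2 x2] y2 c by simp
    define H where "H = generate SL2 {x1, x2}"
    have closed: "u ** v \<in> H" if "u \<in> H" "v \<in> H" for u v
      using generate.eng[OF that[unfolded H_def]] unfolding H_def by simp
    have x1H: "x1 \<in> H" unfolding H_def by (rule generate.incl) simp
    have x2H: "x2 \<in> H" unfolding H_def by (rule generate.incl) simp
    have ax1H: "adj2 x1 \<in> H"
      using generate.inv[of x1 "{x1, x2}" SL2] inv_SL2[of x1] c(1) unfolding H_def by simp
    have tor: "mk (l^n) 0 0 (inverse l ^ n) \<in> H" for n
    proof (induction n)
      case 0
      have "mat 1 \<in> H" unfolding H_def using generate.one[of SL2 "{x1, x2}"] by simp
      then show ?case by (simp add: mat1_mk)
    next
      case (Suc n)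
      have "mk (l^n) 0 0 (inverse l ^ n) ** (x1 ** x2) \<in> H" using Suc closed[OF x1H x2H] closed by blast
      then show ?case using c(7) by (simp add: algebra_simps)
    qed
    have "zariski_dense_SL2 H"
      by (rule dense_main[OF closed c(8) c(9)[rule_format] tor x1H ax1H c(1) c(10-13) inf])
    then show "\<exists>x1 \<in> C1. \<exists>x2 \<in> C2. zariski_dense_SL2 (generate SL2 {x1, x2})"
      using m1 m2 unfolding H_def by blast
  qed
qed

end
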